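(* There exists $n_0$ such that the following holds for all $n\ge n_0$. Let $G$ be a simple connected graph on $n$ vertices with $\lambda_1(G)=\alpha(n)$, and let $f$ be a harmonic eigenfunction for $\lambda_1(G)$. Then every edge $wz$ with $f(w)<0\le f(z)$ is a bridge of $G$, i.e. $G$ minus that edge is disconnected.
   Context: For a connected simple graph $G$ with degree function $d$, \[ \lambda_1(G)=\inf_{f\neq 0,\ \sum_u f(u)d(u)=0}\frac{\sum_{u\sim v}(f(u)-f(v))^2}{\sum_v f(v)^2 d(v)}, \] where the numerator sums over edges. This is the second smallest eigenvalue of the normalized Laplacian. A harmonic eigenfunction is a nonzero $f$ with $\sum_u f(u)d(u)=0$ attaining the infimum. Also, \[ \alpha(n)=\min\{\lambda_1(G): G\text{ simple connected on } n\text{ vertices}\}. \] *)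

theory Defs
  imports Complex_Main
begin

definition simple_graph :: "nat \<Rightarrow> (nat \<Rightarrow> nat \<Rightarrow> bool) \<Rightarrow> bool" where
  "simple_graph n E \<longleftrightarrow> (\<forall>u v. E u v \<longrightarrow> u < n \<and> v < n \<and> u \<noteq> v \<and> E v u)"

definition connected_graph :: "nat \<Rightarrow> (nat \<Rightarrow> nat \<Rightarrow> bool) \<Rightarrow> bool" where
  "connected_graph n E \<longleftrightarrow> 0 < n \<and> (\<forall>u<n. \<forall>v<n. E\<^sup>*\<^sup>* u v)"

definition degree :: "nat \<Rightarrow> (nat \<Rightarrow> nat \<Rightarrow> bool) \<Rightarrow> nat \<Rightarrow> nat" where
  "degree n E u = card {v. v < n \<and> E u v}"

definition rayleigh :: "nat \<Rightarrow> (nat \<Rightarrow> nat \<Rightarrow> bool) \<Rightarrow> (nat \<Rightarrow> real) \<Rightarrow> real" where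
  "rayleigh n E f =
     (\<Sum>(u,v)\<in>{(u,v). u < v \<and> v < n \<and> E u v}. (f u - f v)^2) /
     (\<Sum>v<n. (f v)^2 * real (degree n E v))"

definition admissible :: "nat \<Rightarrow> (nat \<Rightarrow> nat \<Rightarrow> bool) \<Rightarrow> (nat \<Rightarrow> real) \<Rightarrow> bool" where
  "admissible n E f \<longleftrightarrow> (\<exists>u<n. f u \<noteq> 0) \<and> (\<Sum>u<n. f u * real (degree n E u)) = 0"

definition lambda1 :: "nat \<Rightarrow> (nat \<Rightarrow> nat \<Rightarrow> bool) \<Rightarrow> real" where
  "lambda1 n E = Inf {rayleigh n E f | f. admissible n E f}"

definition harmonic_eigenfunction :: "nat \<Rightarrow> (nat \<Rightarrow> nat \<Rightarrow> bool) \<Rightarrow> (nat \<Rightarrow> real) \<Rightarrow> bool" where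
  "harmonic_eigenfunction n E f \<longleftrightarrow> admissible n E f \<and> rayleigh n E f = lambda1 n E"

text \<open>alpha(n): minimum of lambda1 over simple connected graphs on n vertices
 (finitely many graphs, so Inf is the minimum).\<close>
definition alpha :: "nat \<Rightarrow> real" where
  "alpha n = Inf {lambda1 n E | E. simple_graph n E \<and> connected_graph n E}"

definition delete_edge :: "(nat \<Rightarrow> nat \<Rightarrow> bool) \<Rightarrow> nat \<Rightarrow> nat \<Rightarrow> (nat \<Rightarrow> nat \<Rightarrow> bool)" where
  "delete_edge E w z = (\<lambda>x y. E x y \<and> {x, y} \<noteq> {w, z})"

definition is_bridge :: "nat \<Rightarrow> (nat \<Rightarrow> nat \<Rightarrow> bool) \<Rightarrow> nat \<Rightarrow> nat \<Rightarrow> bool" where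
  "is_bridge n E w z \<longleftrightarrow> E w z \<and> \<not> connected_graph n (delete_edge E w z)"

end

theory Submission imports Defs begin

lemma rayleigh_nonneg: "0 \<le> rayleigh n E f"
  unfolding rayleigh_def
  by (intro divide_nonneg_nonneg sum_nonneg) auto

lemma lambda1_le: "admissible n E f \<Longrightarrow> lambda1 n E \<le> rayleigh n E f"
  unfolding lambda1_def
  by (rule cInf_lower) (auto intro!: bdd_belowI[of _ 0] rayleigh_nonneg)

lemma alpha_finite: "finite {lambda1 n E | E. simple_graph n E \<and> connected_graph n E}"
proof -
  have "{lambda1 n E | E. simple_graph n E \<and> connected_graph n E}
     \<subseteq> (\<lambda>S. lambda1 n (\<lambda>u v. (u,v) \<in> S)) ` Pow ({..<n}\<times>{..<n})"
  proof
    fix x assume "x \<in> {lambda1 n E | E. simple_graph n E \<and> connected_graph n E}"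
    then obtain E where x: "x = lambda1 n E" and s: "simple_graph n E" by auto
    define S where "S = {(u,v). u<n \<and> v<n \<and> E u v}"
    have eq: "(\<lambda>u v. (u,v) \<in> S) = E"
      using s unfolding simple_graph_def S_def by (auto simp: fun_eq_iff)
    have "S \<in> Pow ({..<n}\<times>{..<n})" unfolding S_def by auto
    moreover have "x = lambda1 n (\<lambda>u v. (u,v) \<in> S)" unfolding eq x ..
    ultimately show "x \<in> (\<lambda>S. lambda1 n (\<lambda>u v. (u,v) \<in> S)) ` Pow ({..<n}\<times>{..<n})" by blast
  qed
  then show ?thesis by (rule finite_subset) auto
qed

lemma alpha_le: "simple_graph n E \<Longrightarrow> connected_graph n E \<Longrightarrow> alpha n \<le> lambda1 n E"
  unfolding alpha_def
  by (rule cInf_lower) (auto intro!: bdd_below_finite alpha_finite)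

lemma degree_pos:
  assumes s: "simple_graph n E" and c: "connected_graph n E" and n: "2 \<le> n" and u: "u < n"
  shows "1 \<le> degree n E u"
proof -
  define v where "v = (if u = 0 then 1 else 0::nat)"
  have v: "v < n" "v \<noteq> u" using n u by (auto simp: v_def)
  have "E\<^sup>*\<^sup>* u v" using c u v unfolding connected_graph_def by auto
  then obtain y where "E u y" using v(2) by (metis converse_rtranclpE)
  then have "y \<in> {v. v < n \<and> E u v}" using s unfolding simple_graph_def by auto
  then have "{v. v < n \<and> E u v} \<noteq> {}" by auto
  moreover have "finite {v. v < n \<and> E u v}" by simp
  ultimately have "0 < card {v. v < n \<and> E u v}" by (simp add: card_gt_0_iff)
  then show ?thesis unfolding degree_def by simp
qed

definition pathE :: "nat \<Rightarrow> nat \<Rightarrow> nat \<Rightarrow> bool" where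
  "pathE n = (\<lambda>u v. u<n \<and> v<n \<and> (v = Suc u \<or> u = Suc v))"
definition ph :: "nat \<Rightarrow> nat \<Rightarrow> real" where
  "ph n v = (if 2*v+1 < n then -1 else if 2*v+1 = n then 0 else 1)"

lemma path_simple: "simple_graph n (pathE n)"
  by (auto simp: simple_graph_def pathE_def)

lemma path_reach: "u + k < n \<Longrightarrow> (pathE n)\<^sup>*\<^sup>* u (u+k) \<and> (pathE n)\<^sup>*\<^sup>* (u+k) u"
proof (induction k)
  case 0 then show ?case by auto
next
  case (Suc k)
  then have ih: "(pathE n)\<^sup>*\<^sup>* u (u+k)" "(pathE n)\<^sup>*\<^sup>* (u+k) u" by auto
  have e1: "pathE n (u+k) (u + Suc k)" "pathE n (u + Suc k) (u+k)" using Suc.prems by (auto simp: pathE_def)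
  show ?case
    using rtranclp.rtrancl_into_rtrancl[OF ih(1) e1(1)] converse_rtranclp_into_rtranclp[OF e1(2) ih(2)]
    by auto
qed

lemma path_conn: "0 < n \<Longrightarrow> connected_graph n (pathE n)"
  unfolding connected_graph_def
proof (intro conjI allI impI)
  fix u v assume "0 < n" "u < n" "v < n"
  show "(pathE n)\<^sup>*\<^sup>* u v"
  proof (cases "u \<le> v")
    case True
    then show ?thesis using path_reach[of u "v-u" n] \<open>v<n\<close> by auto
  next
    case False
    then show ?thesis using path_reach[of v "u-v" n] \<open>u<n\<close> by auto
  qed
qed auto

lemma path_deg_sym:
  assumes "v < n" shows "degree n (pathE n) (n-1-v) = degree n (pathE n) v"
proof -
  have "{x. x<n \<and> pathE n (n-1-v) x} = (\<lambda>x. n-1-x) ` {x. x<n \<and> pathE n v x}"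
  proof (rule set_eqI, rule iffI)
    fix x assume "x \<in> {x. x<n \<and> pathE n (n-1-v) x}"
    then have "x < n" "n-1-x < n" "pathE n v (n-1-x)" "x = n-1-(n-1-x)" using assms by (auto simp: pathE_def)
    then show "x \<in> (\<lambda>x. n-1-x) ` {x. x<n \<and> pathE n v x}" by blast
  next
    fix x assume "x \<in> (\<lambda>x. n-1-x) ` {x. x<n \<and> pathE n v x}"
    then show "x \<in> {x. x<n \<and> pathE n (n-1-v) x}" using assms by (auto simp: pathE_def)
  qed
  moreover have "inj_on (\<lambda>x. n-1-x) {x. x<n \<and> pathE n v x}" by (auto simp: inj_on_def)
  ultimately show ?thesis unfolding degree_def by (simp add: card_image)
qed

lemma sum_reflect: "(\<Sum>v<(n::nat). g (n-1-v)) = (\<Sum>v<n. (g v :: real))"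
  apply (rule sum.reindex_bij_witness[of _ "\<lambda>v. n-1-v" "\<lambda>v. n-1-v"])
  apply (simp_all add: lessThan_iff)
  done

lemma ph_reflect: "v < n \<Longrightarrow> ph n (n-1-v) = - ph n v"
  unfolding ph_def by auto

lemma path_sum0: "(\<Sum>v<n. ph n v * real (degree n (pathE n) v)) = 0"
proof -
  let ?S = "(\<Sum>v<n. ph n v * real (degree n (pathE n) v))"
  have "?S = (\<Sum>v<n. ph n (n-1-v) * real (degree n (pathE n) (n-1-v)))"
    by (rule sum_reflect[symmetric])
  also have "\<dots> = (\<Sum>v<n. - (ph n v * real (degree n (pathE n) v)))"
  proof (rule sum.cong)
    fix v assume "v \<in> {..<n}"
    then show "ph n (n-1-v) * real (degree n (pathE n) (n-1-v)) = - (ph n v * real (degree n (pathE n) v))"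
      using ph_reflect[of v n] path_deg_sym[of v n] by simp
  qed simp
  also have "\<dots> = - ?S" by (simp add: sum_negf)
  finally show ?thesis by simp
qed

lemma path_edges: "{(u,v). u<v \<and> v<n \<and> pathE n u v} = (\<lambda>u. (u,Suc u)) ` {..<n-1}"
  by (auto simp: pathE_def image_iff)

lemma ph_mono: "ph n u \<le> ph n (Suc u)" unfolding ph_def by auto

lemma ph_step: "(ph n u - ph n (Suc u))^2 \<le> 2 * (ph n (Suc u) - ph n u)"
  unfolding ph_def by (auto simp: power2_eq_square)

lemma path_num: assumes "2 \<le> n"
  shows "(\<Sum>(u,v)\<in>{(u,v). u<v \<and> v<n \<and> pathE n u v}. (ph n u - ph n v)^2) \<le> 4"
proof -
  have "(\<Sum>(u,v)\<in>{(u,v). u<v \<and> v<n \<and> pathE n u v}. (ph n u - ph n v)^2)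
      = (\<Sum>u<n-1. (ph n u - ph n (Suc u))^2)"
    unfolding path_edges by (subst sum.reindex) (auto simp: inj_on_def)
  also have "\<dots> \<le> (\<Sum>u<n-1. 2 * (ph n (Suc u) - ph n u))"
    by (rule sum_mono) (rule ph_step)
  also have "\<dots> = 2 * (\<Sum>u<n-1. ph n (Suc u) - ph n u)"
    by (simp add: sum_distrib_left)
  also have "\<dots> = 2 * (ph n (n-1) - ph n 0)"
    by (simp only: sum_lessThan_telescope)
  also have "\<dots> = 4" using assms unfolding ph_def by (auto; arith)
  finally show ?thesis .
qed

lemma path_den: assumes "2 \<le> n" and d: "\<And>v. v < n \<Longrightarrow> 1 \<le> degree n (pathE n) v"
  shows "real n - 1 \<le> (\<Sum>v<n. (ph n v)^2 * real (degree n (pathE n) v))"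
proof -
  have "(\<Sum>v<n. 1 - (if v = (n-1) div 2 then 1 else 0)) \<le> (\<Sum>v<n. (ph n v)^2 * real (degree n (pathE n) v))"
  proof (rule sum_mono)
    fix v assume v: "v \<in> {..<n}"
    have "1 - (if v = (n-1) div 2 then 1 else 0) \<le> (ph n v)^2" unfolding ph_def by auto
    also have "\<dots> \<le> (ph n v)^2 * real (degree n (pathE n) v)"
      using d[of v] v by (simp add: mult_le_cancel_left1)
    finally show "1 - (if v = (n-1) div 2 then 1 else 0) \<le> (ph n v)^2 * real (degree n (pathE n) v)" .
  qed
  moreover have "(\<Sum>v<n. 1 - (if v = (n-1) div 2 then 1 else 0::real)) = real n - 1"
    using assms by (simp add: sum_subtractf)
  ultimately show ?thesis by simp
qed


lemma alpha_small: assumes n: "10 \<le> n" shows "alpha n < 1/2"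
proof -
  have s: "simple_graph n (pathE n)" by (rule path_simple)
  have c: "connected_graph n (pathE n)" using n by (intro path_conn) simp
  have d: "\<And>v. v < n \<Longrightarrow> 1 \<le> degree n (pathE n) v"
    using degree_pos[OF s c] n by auto
  have adm: "admissible n (pathE n) (ph n)"
    unfolding admissible_def using n path_sum0[of n] by (auto simp: ph_def intro!: exI[of _ 0])
  have num: "(\<Sum>(u,v)\<in>{(u,v). u<v \<and> v<n \<and> pathE n u v}. (ph n u - ph n v)^2) \<le> 4"
    using n by (intro path_num) simp
  have den: "real n - 1 \<le> (\<Sum>v<n. (ph n v)^2 * real (degree n (pathE n) v))"
    using n d by (intro path_den) auto
  have "rayleigh n (pathE n) (ph n) \<le> 4 / (real n - 1)"
    unfolding rayleigh_def
    apply (rule frac_le)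
    using num den n by (auto intro: sum_nonneg)
  also have "\<dots> < 1/2" using n by (simp add: divide_simps)
  finally have "rayleigh n (pathE n) (ph n) < 1/2" .
  moreover have "alpha n \<le> rayleigh n (pathE n) (ph n)"
    using alpha_le[OF s c] lambda1_le[OF adm] by linarith
  ultimately show ?thesis by linarith
qed


lemma main_lemma:
  assumes n: "10 \<le> n" and s: "simple_graph n E" and c: "connected_graph n E"
    and la: "lambda1 n E = alpha n" and h: "harmonic_eigenfunction n E f"
    and w: "w < n" and z: "z < n" and ewz: "E w z" and fw: "f w < 0" and fz: "0 \<le> f z"
  shows "is_bridge n E w z"
proof (rule ccontr)
  define E' where "E' = delete_edge E w z"
  assume "\<not> is_bridge n E w z"
  then have c': "connected_graph n E'" using ewz by (simp add: is_bridge_def E'_def)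
  have s': "simple_graph n E'" using s
    unfolding simple_graph_def E'_def delete_edge_def by (auto simp: insert_commute)
  have wz: "w \<noteq> z" and ezw: "E z w" using s ewz unfolding simple_graph_def by auto
  have n2: "2 \<le> n" using n by simp
  have E'w: "\<And>v. E' w v \<longleftrightarrow> E w v \<and> v \<noteq> z"
    unfolding E'_def delete_edge_def by (auto simp: doubleton_eq_iff)
  have E'z: "\<And>v. E' z v \<longleftrightarrow> E z v \<and> v \<noteq> w"
    unfolding E'_def delete_edge_def using wz by (auto simp: doubleton_eq_iff)
  have E'o: "\<And>u v. u \<noteq> w \<Longrightarrow> u \<noteq> z \<Longrightarrow> E' u v \<longleftrightarrow> E u v"
    unfolding E'_def delete_edge_def by (auto simp: doubleton_eq_iff)
  have deg': "real (degree n E' u) = real (degree n E u) - (if u = w then 1 else 0) - (if u = z then 1 else 0)" for u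
  proof -
    consider "u = w" | "u = z" | "u \<noteq> w" "u \<noteq> z" by blast
    then show ?thesis
    proof cases
      case 1
      have eq: "{v. v < n \<and> E' u v} = {v. v < n \<and> E u v} - {z}" using 1 E'w by auto
      have mem: "z \<in> {v. v < n \<and> E u v}" using 1 z ewz by auto
      have "card ({v. v < n \<and> E u v} - {z}) = card {v. v < n \<and> E u v} - 1"
        using mem by (simp add: card_Diff_singleton)
      moreover have "card {v. v < n \<and> E u v} \<ge> 1" using mem
        by (simp add: Suc_le_eq card_gt_0_iff) blast
      ultimately show ?thesis using 1 wz unfolding degree_def eq by (simp add: of_nat_diff)
    next
      case 2
      have eq: "{v. v < n \<and> E' u v} = {v. v < n \<and> E u v} - {w}" using 2 E'z by auto
      have mem: "w \<in> {v. v < n \<and> E u v}" using 2 w ezw by auto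
      have "card ({v. v < n \<and> E u v} - {w}) = card {v. v < n \<and> E u v} - 1"
        using mem by (simp add: card_Diff_singleton)
      moreover have "card {v. v < n \<and> E u v} \<ge> 1" using mem
        by (simp add: Suc_le_eq card_gt_0_iff) blast
      ultimately show ?thesis using 2 wz unfolding degree_def eq by (simp add: of_nat_diff)
    next
      case 3
      then show ?thesis unfolding degree_def using E'o by simp
    qed
  qed
  have sumd: "(\<Sum>u<n. \<phi> u * real (degree n E' u)) = (\<Sum>u<n. \<phi> u * real (degree n E u)) - \<phi> w - \<phi> z" for \<phi>
  proof -
    have "(\<Sum>u<n. \<phi> u * real (degree n E' u)) =
       (\<Sum>u<n. \<phi> u * real (degree n E u) - (if u = w then \<phi> w else 0) - (if u = z then \<phi> z else 0))"
      by (rule sum.cong) (auto simp: deg' algebra_simps)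
    also have "\<dots> = (\<Sum>u<n. \<phi> u * real (degree n E u)) - \<phi> w - \<phi> z"
      using w z by (simp add: sum_subtractf)
    finally show ?thesis .
  qed
  define F where "F = {(u,v). u<v \<and> v<n \<and> E u v}"
  define F' where "F' = {(u,v). u<v \<and> v<n \<and> E' u v}"
  define p where "p = (min w z, max w z)"
  have pF: "p \<in> F" using wz w z ewz ezw unfolding p_def F_def by (auto simp: min_def max_def)
  have F'eq: "F' = F - {p}"
    unfolding F'_def F_def p_def E'_def delete_edge_def using wz
    by (auto simp: doubleton_eq_iff min_def max_def)
  have finF: "finite F"
    by (rule finite_subset[of _ "{..<n}\<times>{..<n}"]) (auto simp: F_def)
  define a where "a = f w"
  define b where "b = f z"
  define N where "N = (\<Sum>(u,v)\<in>F. (f u - f v)^2)"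
  define D where "D = (\<Sum>v<n. (f v)^2 * real (degree n E v))"
  have pterm: "(case p of (u,v) \<Rightarrow> (f u - f v)^2) = (a - b)^2"
    unfolding p_def a_def b_def by (cases "w \<le> z") (auto simp: min_def max_def power2_commute)
  have N': "(\<Sum>(u,v)\<in>F'. (f u - f v)^2) = N - (a-b)^2"
    unfolding N_def F'eq using sum.remove[OF finF pF, of "\<lambda>(u,v). (f u - f v)^2"] pterm by simp
  have adm: "admissible n E f" and rq: "rayleigh n E f = lambda1 n E"
    using h unfolding harmonic_eigenfunction_def by auto
  have sum0: "(\<Sum>u<n. f u * real (degree n E u)) = 0" using adm unfolding admissible_def by auto
  have dw: "1 \<le> degree n E w" using degree_pos[OF s c n2 w] .
  have D0: "(f w)^2 * real (degree n E w) \<le> D"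
    unfolding D_def using w by (intro member_le_sum) auto
  have "0 < (f w)^2 * real (degree n E w)" using fw dw by (simp add: mult_pos_pos)
  then have Dpos: "0 < D" using D0 by linarith
  define V where "V = (\<Sum>u<n. real (degree n E' u))"
  have dw': "1 \<le> degree n E' w" using degree_pos[OF s' c' n2 w] .
  have dz': "1 \<le> degree n E' z" using degree_pos[OF s' c' n2 z] .
  have "real (degree n E' w) \<le> V" unfolding V_def using w by (intro member_le_sum) auto
  then have V1: "1 \<le> V" using dw' by linarith
  define cc where "cc = (a + b) / V"
  define g where "g = (\<lambda>u. f u + cc)"
  have ccV: "cc * V = a + b" unfolding cc_def using V1 by simp
  have sumfd': "(\<Sum>u<n. f u * real (degree n E' u)) = - a - b"
    using sumd[of f] sum0 unfolding a_def b_def by simp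
  have gsum: "(\<Sum>u<n. g u * real (degree n E' u)) = 0"
  proof -
    have "(\<Sum>u<n. g u * real (degree n E' u)) = (\<Sum>u<n. f u * real (degree n E' u)) + cc * V"
      unfolding g_def V_def by (simp add: algebra_simps sum.distrib sum_distrib_left)
    then show ?thesis using sumfd' ccV by simp
  qed
  have gne: "g w \<noteq> 0 \<or> g z \<noteq> 0" unfolding g_def using fw fz by auto
  have admg: "admissible n E' g" unfolding admissible_def using gsum gne w z by auto
  have numg: "(\<Sum>(u,v)\<in>F'. (g u - g v)^2) = N - (a-b)^2"
    using N' unfolding g_def by simp
  define D' where "D' = (\<Sum>v<n. (g v)^2 * real (degree n E' v))"
  have D'eq: "D' = D - a^2 - b^2 - cc * (a + b)"
  proof -
    have "D' = (\<Sum>v<n. (f v)^2 * real (degree n E' v)) + 2 * cc * (\<Sum>v<n. f v * real (degree n E' v)) + cc^2 * V"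
      unfolding D'_def g_def V_def
      by (simp add: power2_eq_square algebra_simps sum.distrib sum_distrib_left)
    also have "\<dots> = (D - a^2 - b^2) + 2 * cc * (- a - b) + cc * (cc * V)"
      using sumd[of "\<lambda>v. (f v)^2"] sumfd' unfolding D_def a_def b_def by (simp add: power2_eq_square)
    finally show ?thesis unfolding ccV by (simp add: algebra_simps)
  qed
  have "(\<Sum>v\<in>{w,z}. (g v)^2 * real (degree n E' v)) \<le> D'"
    unfolding D'_def using w z by (intro sum_mono2) auto
  moreover have "(\<Sum>v\<in>{w,z}. (g v)^2 * real (degree n E' v)) = (g w)^2 * real (degree n E' w) + (g z)^2 * real (degree n E' z)"
    using wz by simp
  moreover have "(g w)^2 \<le> (g w)^2 * real (degree n E' w)" "(g z)^2 \<le> (g z)^2 * real (degree n E' z)"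
    using dw' dz' by (simp_all add: mult_le_cancel_left1)
  moreover have "0 < (g w)^2 + (g z)^2" using gne by (auto simp: add_pos_nonneg add_nonneg_pos)
  ultimately have D'pos: "0 < D'" by linarith
  have lamE: "alpha n = N / D" using la rq unfolding rayleigh_def N_def D_def F_def by simp
  have "alpha n \<le> lambda1 n E'" by (rule alpha_le[OF s' c'])
  also have "\<dots> \<le> rayleigh n E' g" by (rule lambda1_le[OF admg])
  also have "\<dots> = (N - (a-b)^2) / D'" unfolding rayleigh_def D'_def using numg unfolding F'_def by simp
  finally have l1: "alpha n * D' \<le> N - (a-b)^2" using D'pos by (simp add: pos_le_divide_eq)
  have lD: "alpha n * D = N" using lamE Dpos by simp
  define lam where "lam = alpha n"
  have lam_small: "lam < 1/2" unfolding lam_def by (rule alpha_small[OF n])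
  have lam_nn: "0 \<le> lam" unfolding lam_def lamE N_def using Dpos
    by (intro divide_nonneg_nonneg sum_nonneg) auto
  have h1: "(a-b)^2 \<le> lam * (a^2 + b^2 + cc*(a+b))"
    using l1 lD unfolding D'eq lam_def by (simp add: algebra_simps)
  have ab: "a * b \<le> 0" unfolding a_def b_def using fw fz by (simp add: mult_nonpos_nonneg)
  have ccs: "cc * (a+b) = (a+b)^2 / V" unfolding cc_def by (simp add: power2_eq_square)
  have "(a+b)^2 * 1 \<le> (a+b)^2 * V" using V1 by (intro mult_left_mono) auto
  then have "(a+b)^2 / V \<le> (a+b)^2" using V1 by (simp add: divide_le_eq)
  also have "\<dots> \<le> a^2 + b^2" using ab by (simp add: power2_eq_square algebra_simps)
  finally have h2: "cc*(a+b) \<le> a^2 + b^2" using ccs by simp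
  have h3: "lam * (a^2 + b^2 + cc*(a+b)) \<le> lam * (2 * (a^2 + b^2))"
    using h2 lam_nn by (intro mult_left_mono) auto
  have apos: "0 < a^2 + b^2" using fw unfolding a_def by (simp add: add_pos_nonneg)
  have h4: "lam * (2 * (a^2 + b^2)) < a^2 + b^2"
  proof -
    have "lam * 2 < 1" using lam_small by simp
    then have "(lam * 2) * (a^2 + b^2) < 1 * (a^2 + b^2)" using apos by (intro mult_strict_right_mono) auto
    then show ?thesis by (simp add: algebra_simps)
  qed
  have h5: "a^2 + b^2 \<le> (a-b)^2" using ab by (simp add: power2_eq_square algebra_simps)
  show False using h1 h3 h4 h5 by linarith
qed

theorem mainTheorem9:
  "\<exists>n0::nat. \<forall>n\<ge>n0. \<forall>E f w z.
     simple_graph n E \<and> connected_graph n E \<and> lambda1 n E = alpha n \<and>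
     harmonic_eigenfunction n E f \<and> w < n \<and> z < n \<and> E w z \<and> f w < 0 \<and> 0 \<le> f z
     \<longrightarrow> is_bridge n E w z"
  by (intro exI[of _ 10] allI impI) (use main_lemma in blast)

end
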